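(* Let $n,m$ be even integers with $2\le m\le n$ (for the second formula) and $n\ge0$ (for the first), let $h_l$ be the orthonormal Hermite polynomials for the weight $e^{-x^2}$ on $\mathbb{R}$, and let $\lambda_{\frac n2+1}$ and $\lambda^{m/2}_{\frac{n-m}2+1}$ be the smallest zeros of $p^{(-1/2)}_{\frac n2+1}(x)$ and $p^{(-1/2)}_{\frac{n-m}2+1}(x,\frac m2)$. For constants $\kappa_1,\kappa_2\in\mathbb{C}$ let $\mathcal{H}_n(x)=\kappa_1\sum_{l=0}^{n/2}p^{(-1/2)}_l(\lambda_{\frac n2+1})h_{2l}(x)$ and $\mathcal{H}^m_n(x)=\kappa_2\sum_{l=m/2}^{n/2}p^{(-1/2)}_{l-\frac m2}(\lambda^{m/2}_{\frac{n-m}2+1},\frac m2)h_{2l}(x)$. Then for $x^2$ different from the respective zero, $\mathcal{H}_n(x)=\kappa_1b_{\frac n2+1}\,p^{(-1/2)}_{n/2}(\lambda_{\frac n2+1})\dfrac{h_{n+2}(x)}{x^2-\lambda_{\frac n2+1}}$, $\mathcal{H}^m_n(x)=\kappa_2\dfrac{b_{\frac n2+1}\,p^{(-1/2)}_{\frac{n-m}2}(\lambda^{m/2}_{\frac{n-m}2+1},\frac m2)\,h_{n+2}(x)+b_{m/2}\,h_{m-2}(x)}{x^2-\lambda^{m/2}_{\frac{n-m}2+1}}$, where $b_k=\sqrt{k(k-\frac12)}$ are the Laguerre recurrence coefficients for $\alpha=-\frac12$.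
   Context: $p^{(\alpha)}_l$ are the orthonormal Laguerre polynomials in $L^2([0,\infty),x^\alpha e^{-x})$ with positive leading coefficients; they satisfy $b_{l+1}p^{(\alpha)}_{l+1}(x)=(x-a_l)p^{(\alpha)}_l(x)-b_lp^{(\alpha)}_{l-1}(x)$ with $a_l=2l+\alpha+1$, $b_l=\sqrt{l(l+\alpha)}$ ($l\ge1$). Associated Laguerre polynomials: $p^{(\alpha)}_{-1}(x,M)=0$, $p^{(\alpha)}_0(x,M)=1$, $b_{M+l+1}p^{(\alpha)}_{l+1}(x,M)=(x-a_{M+l})p^{(\alpha)}_l(x,M)-b_{M+l}p^{(\alpha)}_{l-1}(x,M)$. One has $h_{2l}(x)=p^{(-1/2)}_l(x^2)$. With $\kappa_1,\kappa_2$ normalizing, $\mathcal{H}_n$, $\mathcal{H}^m_n$ are the minimizers of $\int x^2|P|^2e^{-x^2}dx$ over normalized polynomials in $\operatorname{span}\{h_0,\dots,h_n\}$, resp. $\operatorname{span}\{h_m,\dots,h_n\}$. *)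

theory Defs
  imports "HOL-Analysis.Analysis"
begin

definition lag_a :: "real \<Rightarrow> nat \<Rightarrow> real" where
  "lag_a \<alpha> l = 2 * real l + \<alpha> + 1"

definition lag_b :: "real \<Rightarrow> nat \<Rightarrow> real" where
  "lag_b \<alpha> l = sqrt (real l * (real l + \<alpha>))"

text \<open>Orthonormal Laguerre polynomials p_l^(alpha) in L^2([0,inf), x^alpha e^-x),
  positive leading coefficient; p_0 = 1/sqrt(Gamma(alpha+1)), p_{-1} = 0.\<close>
fun lag_p :: "real \<Rightarrow> nat \<Rightarrow> real \<Rightarrow> real" where
  "lag_p \<alpha> 0 x = 1 / sqrt (Gamma (\<alpha> + 1))"
| "lag_p \<alpha> (Suc 0) x = (x - lag_a \<alpha> 0) * lag_p \<alpha> 0 x / lag_b \<alpha> 1"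
| "lag_p \<alpha> (Suc (Suc l)) x =
     ((x - lag_a \<alpha> (Suc l)) * lag_p \<alpha> (Suc l) x - lag_b \<alpha> (Suc l) * lag_p \<alpha> l x)
       / lag_b \<alpha> (Suc (Suc l))"

fun lag_assoc :: "real \<Rightarrow> nat \<Rightarrow> nat \<Rightarrow> real \<Rightarrow> real" where
  "lag_assoc \<alpha> M 0 x = 1"
| "lag_assoc \<alpha> M (Suc 0) x = (x - lag_a \<alpha> M) / lag_b \<alpha> (M + 1)"
| "lag_assoc \<alpha> M (Suc (Suc l)) x =
     ((x - lag_a \<alpha> (M + Suc l)) * lag_assoc \<alpha> M (Suc l) x
        - lag_b \<alpha> (M + Suc l) * lag_assoc \<alpha> M l x) / lag_b \<alpha> (M + Suc (Suc l))"

text \<open>Orthonormal Hermite polynomials for the weight exp(-x^2) on the real line,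
  positive leading coefficient: x h_n = sqrt((n+1)/2) h_{n+1} + sqrt(n/2) h_{n-1}.\<close>
fun herm :: "nat \<Rightarrow> real \<Rightarrow> real" where
  "herm 0 x = pi powr (-1/4)"
| "herm (Suc 0) x = sqrt 2 * x * herm 0 x"
| "herm (Suc (Suc n)) x =
     sqrt (2 / real (n + 2)) * x * herm (Suc n) x - sqrt (real (n + 1) / real (n + 2)) * herm n x"

end

theory Submission imports Defs begin

lemma xh: "x * herm (Suc n) x = sqrt ((real n + 2)/2) * herm (n+2) x + sqrt ((real n + 1)/2) * herm n x"
proof -
  have d: "herm (Suc (Suc n)) x = sqrt (2 / real (n + 2)) * x * herm (Suc n) x - sqrt (real (n + 1) / real (n + 2)) * herm n x"
    by simp
  have s1: "sqrt ((real n + 2)/2) * sqrt (2 / real (n + 2)) = 1"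
    by (simp add: real_sqrt_mult[symmetric])
  have s2: "sqrt ((real n + 2)/2) * sqrt (real (n + 1) / real (n + 2)) = sqrt ((real n + 1)/2)"
    by (simp add: real_sqrt_mult[symmetric] field_simps)
  have "sqrt ((real n + 2)/2) * herm (n+2) x = (sqrt ((real n + 2)/2) * sqrt (2 / real (n + 2))) * x * herm (Suc n) x
      - (sqrt ((real n + 2)/2) * sqrt (real (n + 1) / real (n + 2))) * herm n x"
    using d by (simp add: numeral_2_eq_2 algebra_simps)
  then show ?thesis using s1 s2 by simp
qed

lemma herm_even_rec:
  "x\<^sup>2 * herm (2*L+2) x = sqrt ((real L + 2) * (real L + 3/2)) * herm (2*L+4) x
     + (2 * real L + 5/2) * herm (2*L+2) x + sqrt ((real L + 1) * (real L + 1/2)) * herm (2*L) x"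
proof -
  have a: "x * herm (2*L+2) x = sqrt ((2*real L + 3)/2) * herm (2*L+3) x + sqrt ((2*real L + 2)/2) * herm (2*L+1) x"
    using xh[of x "2*L+1"] by (simp del: herm.simps add: algebra_simps numeral_eq_Suc)
  have b: "x * herm (2*L+3) x = sqrt ((2*real L + 4)/2) * herm (2*L+4) x + sqrt ((2*real L + 3)/2) * herm (2*L+2) x"
    using xh[of x "2*L+2"] by (simp del: herm.simps add: algebra_simps numeral_eq_Suc)
  have c: "x * herm (2*L+1) x = sqrt ((2*real L + 2)/2) * herm (2*L+2) x + sqrt ((2*real L + 1)/2) * herm (2*L) x"
    using xh[of x "2*L"] by (simp del: herm.simps add: algebra_simps numeral_eq_Suc)
  have "x\<^sup>2 * herm (2*L+2) x = sqrt ((2*real L + 3)/2) * (x * herm (2*L+3) x) + sqrt ((2*real L + 2)/2) * (x * herm (2*L+1) x)"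
    using a by (simp del: herm.simps add: power2_eq_square algebra_simps)
  also have "\<dots> = (sqrt ((2*real L + 3)/2) * sqrt ((2*real L + 4)/2)) * herm (2*L+4) x
       + (sqrt ((2*real L + 3)/2) * sqrt ((2*real L + 3)/2) + sqrt ((2*real L + 2)/2) * sqrt ((2*real L + 2)/2)) * herm (2*L+2) x
       + (sqrt ((2*real L + 2)/2) * sqrt ((2*real L + 1)/2)) * herm (2*L) x"
    unfolding b c by (simp only: algebra_simps)
  finally have E: "x\<^sup>2 * herm (2*L+2) x = (sqrt ((2*real L + 3)/2) * sqrt ((2*real L + 4)/2)) * herm (2*L+4) x
       + (sqrt ((2*real L + 3)/2) * sqrt ((2*real L + 3)/2) + sqrt ((2*real L + 2)/2) * sqrt ((2*real L + 2)/2)) * herm (2*L+2) x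
       + (sqrt ((2*real L + 2)/2) * sqrt ((2*real L + 1)/2)) * herm (2*L) x" .
  have s1: "sqrt ((2*real L + 3)/2) * sqrt ((2*real L + 4)/2) = sqrt ((real L + 2) * (real L + 3/2))"
    by (simp add: real_sqrt_mult[symmetric] field_simps)
  have s2: "sqrt ((2*real L + 3)/2) * sqrt ((2*real L + 3)/2) + sqrt ((2*real L + 2)/2) * sqrt ((2*real L + 2)/2) = 2 * real L + 5/2"
    by (simp add: field_simps)
  have s3: "sqrt ((2*real L + 2)/2) * sqrt ((2*real L + 1)/2) = sqrt ((real L + 1) * (real L + 1/2))"
    by (simp add: real_sqrt_mult[symmetric] field_simps)
  show ?thesis using E unfolding s1 s2 s3 .
qed


lemma p0: "lag_p (-1/2) 0 y = pi powr (-1/4)"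
proof -
  have "sqrt (sqrt pi) = (pi powr (1/2)) powr (1/2)"
    using powr_half_sqrt[of pi] powr_half_sqrt[of "sqrt pi"] by simp
  also have "\<dots> = pi powr (1/4)" by (simp add: powr_powr)
  finally have e: "sqrt (sqrt pi) = pi powr (1/4)" .
  have "lag_p (-1/2) 0 y = 1 / sqrt (Gamma (1/2))" by simp
  also have "\<dots> = 1 / pi powr (1/4)" by (simp only: Gamma_one_half_real e)
  also have "\<dots> = pi powr (-1/4)" by (simp add: powr_minus_divide)
  finally show ?thesis .
qed

lemma s22[simp]: "sqrt 2 * (sqrt 2 * c) = 2 * (c::real)"
  by (simp add: mult.assoc[symmetric])

lemma h2: "herm 2 x = (2*x\<^sup>2 - 1) / sqrt 2 * pi powr (-1/4)"
proof -
  have "herm 2 x = sqrt (2/2) * x * (sqrt 2 * x * pi powr (-1/4)) - sqrt (1/2) * pi powr (-1/4)"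
    by (simp add: numeral_2_eq_2)
  also have "\<dots> = (2*x\<^sup>2 - 1) / sqrt 2 * pi powr (-1/4)"
    by (simp add: power2_eq_square field_simps real_sqrt_divide)
  finally show ?thesis .
qed

lemma l1: "lag_p (-1/2) 1 y = (2*y - 1) / sqrt 2 * pi powr (-1/4)"
proof -
  have "lag_p (-1/2) 1 y = (y - 1/2) * pi powr (-1/4) / sqrt (1/2)"
    using p0[of y] by (simp del: lag_p.simps(1) add: lag_a_def lag_b_def)
  also have "\<dots> = (2*y - 1) / sqrt 2 * pi powr (-1/4)"
    by (simp add: field_simps real_sqrt_divide)
  finally show ?thesis .
qed

lemma herm_even: "herm (2*l) x = lag_p (-1/2) l (x\<^sup>2)"
proof -
  have "herm (2*l) x = lag_p (-1/2) l (x\<^sup>2) \<and> herm (2*l+2) x = lag_p (-1/2) (Suc l) (x\<^sup>2)"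
  proof (induction l)
    case 0
    have "herm 0 x = pi powr (-1/4)" by simp
    then show ?case using h2[of x] l1[of "x\<^sup>2"] p0[of "x\<^sup>2"] by (simp del: herm.simps lag_p.simps add: numeral_2_eq_2)
  next
    case (Suc l)
    have "lag_p (-1/2) (Suc (Suc l)) (x\<^sup>2) = ((x\<^sup>2 - lag_a (-1/2) (Suc l)) * lag_p (-1/2) (Suc l) (x\<^sup>2)
        - lag_b (-1/2) (Suc l) * lag_p (-1/2) l (x\<^sup>2)) / lag_b (-1/2) (Suc (Suc l))" by (simp only: lag_p.simps)
    also have "\<dots> = herm (2*l+4) x"
    proof -
      have e1: "lag_b (-1/2) (Suc (Suc l)) = sqrt ((real l + 2) * (real l + 3/2))"
        by (simp add: lag_b_def field_simps)
      have bpos: "sqrt ((real l + 2) * (real l + 3/2)) > 0" by simp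
      have e2: "lag_b (-1/2) (Suc l) = sqrt ((real l + 1) * (real l + 1/2))"
        by (simp add: lag_b_def field_simps)
      have e3: "lag_a (-1/2) (Suc l) = 2 * real l + 5/2" by (simp add: lag_a_def)
      have IH1: "lag_p (-1/2) l (x\<^sup>2) = herm (2*l) x" and IH2: "lag_p (-1/2) (Suc l) (x\<^sup>2) = herm (2*l+2) x"
        using Suc.IH by auto
      show ?thesis unfolding e1 e2 e3 IH1 IH2 using herm_even_rec[of x l] bpos
        by (simp only: divide_eq_eq) (simp del: herm.simps add: algebra_simps)
    qed
    moreover have "herm (2*Suc l+2) x = herm (2*l+4) x" by (rule arg_cong[where f="\<lambda>n. herm n x"]) simp
    moreover have "herm (2*Suc l) x = herm (2*l+2) x" by (rule arg_cong[where f="\<lambda>n. herm n x"]) simp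
    ultimately show ?case using Suc.IH by (simp only:)
  qed
  then show ?thesis by blast
qed

lemma bpos: "lag_b (-1/2) (Suc l) > 0"
  by (simp add: lag_b_def)

lemma prec: "lag_b (-1/2) (Suc l) * lag_p (-1/2) (Suc l) y
   = (y - lag_a (-1/2) l) * lag_p (-1/2) l y - lag_b (-1/2) l * (if l=0 then 0 else lag_p (-1/2) (l-1) y)"
proof (cases l)
  case 0 then show ?thesis using bpos[of 0] by (simp del: lag_p.simps(1))
next
  case (Suc k) then show ?thesis using bpos[of "Suc k"] by simp
qed

lemma qrec: "lag_b (-1/2) (M + Suc l) * lag_assoc (-1/2) M (Suc l) y
   = (y - lag_a (-1/2) (M+l)) * lag_assoc (-1/2) M l y - lag_b (-1/2) (M+l) * (if l=0 then 0 else lag_assoc (-1/2) M (l-1) y)"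
proof (cases l)
  case 0 then show ?thesis using bpos[of M] by simp
next
  case (Suc k) then show ?thesis using bpos[of "M + Suc k"] by simp
qed

lemma cd1: "(y - lam) * (\<Sum>l=0..N. lag_p (-1/2) l lam * lag_p (-1/2) l y)
   = lag_b (-1/2) (Suc N) * (lag_p (-1/2) (Suc N) y * lag_p (-1/2) N lam - lag_p (-1/2) N y * lag_p (-1/2) (Suc N) lam)"
proof (induction N)
  case 0
  have r1: "lag_b (-1/2) (Suc 0) * lag_p (-1/2) (Suc 0) y = (y - lag_a (-1/2) 0) * lag_p (-1/2) 0 y"
    using prec[of 0 y] by simp
  have r2: "lag_b (-1/2) (Suc 0) * lag_p (-1/2) (Suc 0) lam = (lam - lag_a (-1/2) 0) * lag_p (-1/2) 0 lam"
    using prec[of 0 lam] by simp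
  have "lag_b (-1/2) (Suc 0) * (lag_p (-1/2) (Suc 0) y * lag_p (-1/2) 0 lam - lag_p (-1/2) 0 y * lag_p (-1/2) (Suc 0) lam)
     = (lag_b (-1/2) (Suc 0) * lag_p (-1/2) (Suc 0) y) * lag_p (-1/2) 0 lam - lag_p (-1/2) 0 y * (lag_b (-1/2) (Suc 0) * lag_p (-1/2) (Suc 0) lam)"
    by (simp add: algebra_simps)
  also have "\<dots> = (y - lam) * (lag_p (-1/2) 0 lam * lag_p (-1/2) 0 y)"
    unfolding r1 r2 by (simp del: lag_p.simps add: algebra_simps)
  finally show ?case by simp
next
  case (Suc N)
  let ?P = "lag_p (-1/2)" and ?B = "lag_b (-1/2)"
  have r1: "?B (Suc (Suc N)) * ?P (Suc (Suc N)) y = (y - lag_a (-1/2) (Suc N)) * ?P (Suc N) y - ?B (Suc N) * ?P N y"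
    using prec[of "Suc N" y] by simp
  have r2: "?B (Suc (Suc N)) * ?P (Suc (Suc N)) lam = (lam - lag_a (-1/2) (Suc N)) * ?P (Suc N) lam - ?B (Suc N) * ?P N lam"
    using prec[of "Suc N" lam] by simp
  have "?B (Suc (Suc N)) * (?P (Suc (Suc N)) y * ?P (Suc N) lam - ?P (Suc N) y * ?P (Suc (Suc N)) lam)
     = (?B (Suc (Suc N)) * ?P (Suc (Suc N)) y) * ?P (Suc N) lam - ?P (Suc N) y * (?B (Suc (Suc N)) * ?P (Suc (Suc N)) lam)"
    by (simp add: algebra_simps)
  also have "\<dots> = ?B (Suc N) * (?P (Suc N) y * ?P N lam - ?P N y * ?P (Suc N) lam) + (y - lam) * (?P (Suc N) lam * ?P (Suc N) y)"
    unfolding r1 r2 by (simp add: algebra_simps)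
  also have "\<dots> = (y - lam) * (\<Sum>l=0..Suc N. ?P l lam * ?P l y)"
    using Suc.IH by (simp add: algebra_simps)
  finally show ?case by simp
qed

lemma cd2:
  assumes "M \<ge> 1"
  shows "(y - lam) * (\<Sum>j=0..K. lag_assoc (-1/2) M j lam * lag_p (-1/2) (M+j) y)
   = lag_b (-1/2) (M + Suc K) * (lag_p (-1/2) (M + Suc K) y * lag_assoc (-1/2) M K lam
        - lag_p (-1/2) (M+K) y * lag_assoc (-1/2) M (Suc K) lam) + lag_b (-1/2) M * lag_p (-1/2) (M-1) y"
proof (induction K)
  case 0
  let ?P = "lag_p (-1/2)" and ?B = "lag_b (-1/2)" and ?Q = "lag_assoc (-1/2) M"
  have r1: "?B (Suc M) * ?P (Suc M) y = (y - lag_a (-1/2) M) * ?P M y - ?B M * ?P (M-1) y"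
    using prec[of M y] assms by simp
  have r2: "?B (M + Suc 0) * ?Q (Suc 0) lam = (lam - lag_a (-1/2) M)"
    using qrec[of M 0 lam] by simp
  have "?B (M + Suc 0) * (?P (M + Suc 0) y * ?Q 0 lam - ?P (M+0) y * ?Q (Suc 0) lam) + ?B M * ?P (M-1) y
     = (?B (Suc M) * ?P (Suc M) y) - ?P M y * (?B (M + Suc 0) * ?Q (Suc 0) lam) + ?B M * ?P (M-1) y"
    by (simp add: algebra_simps)
  also have "\<dots> = (y - lam) * (?Q 0 lam * ?P (M+0) y)"
    unfolding r1 r2 by (simp add: algebra_simps)
  finally show ?case by simp
next
  case (Suc K)
  let ?P = "lag_p (-1/2)" and ?B = "lag_b (-1/2)" and ?Q = "lag_assoc (-1/2) M"
  have r1: "?B (M + Suc (Suc K)) * ?P (M + Suc (Suc K)) y = (y - lag_a (-1/2) (M + Suc K)) * ?P (M + Suc K) y - ?B (M + Suc K) * ?P (M + K) y"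
    using prec[of "M + Suc K" y] by simp
  have r2: "?B (M + Suc (Suc K)) * ?Q (Suc (Suc K)) lam = (lam - lag_a (-1/2) (M + Suc K)) * ?Q (Suc K) lam - ?B (M + Suc K) * ?Q K lam"
    using qrec[of M "Suc K" lam] by simp
  have "?B (M + Suc (Suc K)) * (?P (M + Suc (Suc K)) y * ?Q (Suc K) lam - ?P (M + Suc K) y * ?Q (Suc (Suc K)) lam)
     = (?B (M + Suc (Suc K)) * ?P (M + Suc (Suc K)) y) * ?Q (Suc K) lam - ?P (M + Suc K) y * (?B (M + Suc (Suc K)) * ?Q (Suc (Suc K)) lam)"
    by (simp add: algebra_simps)
  also have "\<dots> = ?B (M + Suc K) * (?P (M + Suc K) y * ?Q K lam - ?P (M+K) y * ?Q (Suc K) lam) + (y - lam) * (?Q (Suc K) lam * ?P (M + Suc K) y)"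
    unfolding r1 r2 by (simp add: algebra_simps)
  finally have e: "?B (M + Suc (Suc K)) * (?P (M + Suc (Suc K)) y * ?Q (Suc K) lam - ?P (M + Suc K) y * ?Q (Suc (Suc K)) lam)
     = ?B (M + Suc K) * (?P (M + Suc K) y * ?Q K lam - ?P (M+K) y * ?Q (Suc K) lam) + (y - lam) * (?Q (Suc K) lam * ?P (M + Suc K) y)" .
  have "(y - lam) * (\<Sum>j=0..Suc K. ?Q j lam * ?P (M+j) y) = (y - lam) * (\<Sum>j=0..K. ?Q j lam * ?P (M+j) y) + (y - lam) * (?Q (Suc K) lam * ?P (M + Suc K) y)"
    by (simp add: algebra_simps)
  then show ?case using Suc.IH e by simp
qed
theorem corollary5p3:
  fixes n m :: nat and k1 k2 :: complex and lam1 lam2 :: real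
  assumes "even n" and "even m"
    and "lag_p (-1/2) (n div 2 + 1) lam1 = 0"
    and "\<forall>y. lag_p (-1/2) (n div 2 + 1) y = 0 \<longrightarrow> lam1 \<le> y"
  shows "(\<forall>x::real. x\<^sup>2 \<noteq> lam1 \<longrightarrow>
            k1 * (\<Sum>l = 0..n div 2. complex_of_real (lag_p (-1/2) l lam1 * herm (2 * l) x))
            = k1 * complex_of_real (lag_b (-1/2) (n div 2 + 1) * lag_p (-1/2) (n div 2) lam1
                 * herm (n + 2) x / (x\<^sup>2 - lam1)))
       \<and> ((2 \<le> m \<and> m \<le> n \<and>
            lag_assoc (-1/2) (m div 2) ((n - m) div 2 + 1) lam2 = 0 \<and>
            (\<forall>y. lag_assoc (-1/2) (m div 2) ((n - m) div 2 + 1) y = 0 \<longrightarrow> lam2 \<le> y)) \<longrightarrow>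
           (\<forall>x::real. x\<^sup>2 \<noteq> lam2 \<longrightarrow>
            k2 * (\<Sum>l = m div 2..n div 2.
                 complex_of_real (lag_assoc (-1/2) (m div 2) (l - m div 2) lam2 * herm (2 * l) x))
            = k2 * complex_of_real
                 ((lag_b (-1/2) (n div 2 + 1) * lag_assoc (-1/2) (m div 2) ((n - m) div 2) lam2
                     * herm (n + 2) x + lag_b (-1/2) (m div 2) * herm (m - 2) x)
                  / (x\<^sup>2 - lam2))))"
proof -
  define N where "N = n div 2"
  have n2: "n = 2*N" using assms(1) unfolding N_def by simp
  have hn2: "herm (n+2) x = lag_p (-1/2) (Suc N) (x\<^sup>2)" for x
    using herm_even[of "Suc N" x] n2 by simp
  have part1: "(\<Sum>l = 0..n div 2. lag_p (-1/2) l lam1 * herm (2 * l) x)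
      = lag_b (-1/2) (n div 2 + 1) * lag_p (-1/2) (n div 2) lam1 * herm (n + 2) x / (x\<^sup>2 - lam1)"
    if hx: "x\<^sup>2 \<noteq> lam1" for x
  proof -
    have "(\<Sum>l = 0..n div 2. lag_p (-1/2) l lam1 * herm (2 * l) x) = (\<Sum>l = 0..N. lag_p (-1/2) l lam1 * lag_p (-1/2) l (x\<^sup>2))"
      by (simp add: herm_even N_def)
    moreover have "(x\<^sup>2 - lam1) * (\<Sum>l = 0..N. lag_p (-1/2) l lam1 * lag_p (-1/2) l (x\<^sup>2))
       = lag_b (-1/2) (Suc N) * lag_p (-1/2) (Suc N) (x\<^sup>2) * lag_p (-1/2) N lam1"
      using cd1[of "x\<^sup>2" lam1 N] assms(3) unfolding N_def by simp
    ultimately show ?thesis using hx hn2[of x] unfolding N_def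
      by (simp add: field_simps)
  qed
  have part2: "(\<Sum>l = m div 2..n div 2. lag_assoc (-1/2) (m div 2) (l - m div 2) lam2 * herm (2 * l) x)
      = (lag_b (-1/2) (n div 2 + 1) * lag_assoc (-1/2) (m div 2) ((n - m) div 2) lam2
                     * herm (n + 2) x + lag_b (-1/2) (m div 2) * herm (m - 2) x) / (x\<^sup>2 - lam2)"
    if hm: "2 \<le> m" "m \<le> n" and hz: "lag_assoc (-1/2) (m div 2) ((n - m) div 2 + 1) lam2 = 0"
      and hx: "x\<^sup>2 \<noteq> lam2" for x
  proof -
    define M where "M = m div 2"
    define K where "K = N - M"
    have m2: "m = 2*M" using assms(2) unfolding M_def by simp
    have M1: "M \<ge> 1" using hm m2 by simp
    have KN: "M + K = N" using hm m2 n2 unfolding K_def by simp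
    have nm: "(n - m) div 2 = K" using n2 m2 unfolding K_def by simp
    have hm2: "herm (m-2) x = lag_p (-1/2) (M-1) (x\<^sup>2)"
    proof -
      have "m-2 = 2*(M-1)" using m2 M1 by simp
      then show ?thesis by (simp only: herm_even)
    qed
    have "(\<Sum>l = m div 2..n div 2. lag_assoc (-1/2) (m div 2) (l - m div 2) lam2 * herm (2 * l) x)
       = (\<Sum>l = 0+M..K+M. lag_assoc (-1/2) M (l - M) lam2 * herm (2 * l) x)"
      using KN unfolding M_def N_def by (simp add: add.commute)
    also have "\<dots> = (\<Sum>j = 0..K. lag_assoc (-1/2) M j lam2 * lag_p (-1/2) (M+j) (x\<^sup>2))"
    proof (subst sum.shift_bounds_cl_nat_ivl, rule sum.cong)
      fix j assume "j \<in> {0..K}"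
      have "herm (2 * (j + M)) x = lag_p (-1/2) (M+j) (x\<^sup>2)"
        using herm_even[of "M+j" x] by (simp only: add.commute)
      then show "lag_assoc (-1/2) M (j + M - M) lam2 * herm (2 * (j + M)) x
          = lag_assoc (-1/2) M j lam2 * lag_p (-1/2) (M+j) (x\<^sup>2)" by simp
    qed simp
    finally have S: "(\<Sum>l = m div 2..n div 2. lag_assoc (-1/2) (m div 2) (l - m div 2) lam2 * herm (2 * l) x)
       = (\<Sum>j = 0..K. lag_assoc (-1/2) M j lam2 * lag_p (-1/2) (M+j) (x\<^sup>2))" .
    have C: "(x\<^sup>2 - lam2) * (\<Sum>j = 0..K. lag_assoc (-1/2) M j lam2 * lag_p (-1/2) (M+j) (x\<^sup>2))
       = lag_b (-1/2) (Suc N) * lag_p (-1/2) (Suc N) (x\<^sup>2) * lag_assoc (-1/2) M K lam2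
          + lag_b (-1/2) M * lag_p (-1/2) (M-1) (x\<^sup>2)"
      using cd2[OF M1, of "x\<^sup>2" lam2 K] hz KN unfolding nm M_def[symmetric] by (simp add: algebra_simps)
    show ?thesis unfolding S using C hx hn2[of x] hm2 nm unfolding M_def[symmetric] N_def[symmetric]
      by (simp add: field_simps)
  qed
  show ?thesis
  proof (intro conjI allI impI)
    fix x :: real assume hx: "x\<^sup>2 \<noteq> lam1"
    show "k1 * (\<Sum>l = 0..n div 2. complex_of_real (lag_p (-1/2) l lam1 * herm (2 * l) x))
            = k1 * complex_of_real (lag_b (-1/2) (n div 2 + 1) * lag_p (-1/2) (n div 2) lam1
                 * herm (n + 2) x / (x\<^sup>2 - lam1))"
      by (subst of_real_sum[symmetric], subst part1[OF hx], rule refl)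
  next
    fix x :: real
    assume h: "2 \<le> m \<and> m \<le> n \<and>
            lag_assoc (-1/2) (m div 2) ((n - m) div 2 + 1) lam2 = 0 \<and>
            (\<forall>y. lag_assoc (-1/2) (m div 2) ((n - m) div 2 + 1) y = 0 \<longrightarrow> lam2 \<le> y)"
      and hx: "x\<^sup>2 \<noteq> lam2"
    show "k2 * (\<Sum>l = m div 2..n div 2.
                 complex_of_real (lag_assoc (-1/2) (m div 2) (l - m div 2) lam2 * herm (2 * l) x))
            = k2 * complex_of_real
                 ((lag_b (-1/2) (n div 2 + 1) * lag_assoc (-1/2) (m div 2) ((n - m) div 2) lam2
                     * herm (n + 2) x + lag_b (-1/2) (m div 2) * herm (m - 2) x)
                  / (x\<^sup>2 - lam2))"
      using h by (subst of_real_sum[symmetric], subst part2[OF _ _ _ hx], auto)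
  qed
qed
end
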